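(* Let $s,t$ be real numbers with $t \geq s > 0$. For each positive integer $n$, let $M_n$ denote the maximum of $|\det A|$ over all matrices $A \in \mathcal{G}_s^{n\times n}([0,t])$. Then $M_1 = t$, $M_2 = t^2$, and $M_n = t\,M_{n-1} + s^2 M_{n-2}$ for all integers $n > 2$.
   Context: For a real number $s$, a positive integer $n$ and a set $P \subseteq \mathbb{R}$, $\mathcal{G}_s^{n\times n}(P)$ denotes the set of all $n\times n$ real upper Hessenberg matrices $A=(a_{ij})$ with $a_{i+1,i} = s$ for $1\le i\le n-1$, $a_{ij}=0$ for $i > j+1$, and $a_{ij}\in P$ for all $i \le j$. *)

theory Defs
  imports "Jordan_Normal_Form.Determinant"
begin

definition hess_set :: "real \<Rightarrow> nat \<Rightarrow> real set \<Rightarrow> real mat set" where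
  "hess_set s n P = {A \<in> carrier_mat n n.
     \<forall>i<n. \<forall>j<n. (i = Suc j \<longrightarrow> A $$ (i, j) = s)
                 \<and> (i > Suc j \<longrightarrow> A $$ (i, j) = 0)
                 \<and> (i \<le> j \<longrightarrow> A $$ (i, j) \<in> P)}"

text \<open>M_n: the maximum (supremum, shown attained in the theorem) of |det A|
  over G_s^{n x n}([0,t]).\<close>
definition max_abs_det :: "real \<Rightarrow> real \<Rightarrow> nat \<Rightarrow> real" where
  "max_abs_det s t n = Sup ((\<lambda>A. \<bar>det A\<bar>) ` hess_set s n {0..t})"

end

theory Submission
  imports Defs
begin

definition comb :: "real \<Rightarrow> real mat \<Rightarrow> real mat" where
 "comb s A = mat (dim_row A - 1) (dim_col A - 1) (\<lambda>(i,j). if i = 0 then A$$(0,0) * A$$(1, Suc j) - s * A$$(0, Suc j) else A$$(Suc i, Suc j))"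

lemma det_comb:
  assumes A: "A \<in> carrier_mat (Suc m) (Suc m)" and m: "0 < m" and s: "A$$(1,0) = s"
    and z: "\<forall>i. 1 < i \<and> i < Suc m \<longrightarrow> A$$(i,0) = 0"
  shows "det A = det (comb s A)"
proof -
  define C where "C = mat_delete A 0 0"
  define B where "B = mat_delete A 1 0"
  have Cc: "C \<in> carrier_mat m m" and Bc: "B \<in> carrier_mat m m" and Kc: "comb s A \<in> carrier_mat m m"
    using A unfolding C_def B_def comb_def mat_delete_def by auto
  have "det A = (\<Sum>i<Suc m. A $$ (i,0) * cofactor A i 0)"
    by (rule laplace_expansion_column[OF A], simp)
  also have "\<dots> = (\<Sum>i\<in>{0,1}. A $$ (i,0) * cofactor A i 0)"
    by (rule sum.mono_neutral_right) (use m z in auto)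
  also have "\<dots> = A$$(0,0) * det C - s * det B"
    using s unfolding cofactor_def C_def B_def by simp
  finally have 1: "det A = A$$(0,0) * det C - s * det B" .
  have dC: "det C = (\<Sum>j<m. C $$ (0,j) * cofactor C 0 j)"
    by (rule laplace_expansion_row[OF Cc m])
  have dB: "det B = (\<Sum>j<m. B $$ (0,j) * cofactor B 0 j)"
    by (rule laplace_expansion_row[OF Bc m])
  have dK: "det (comb s A) = (\<Sum>j<m. (comb s A) $$ (0,j) * cofactor (comb s A) 0 j)"
    by (rule laplace_expansion_row[OF Kc m])
  have eC: "cofactor (comb s A) 0 j = cofactor C 0 j" if "j < m" for j
    unfolding cofactor_def
    by (rule arg_cong[where f="\<lambda>X. _ * det X"], rule eq_matI)
       (use A that in \<open>auto simp: mat_delete_def comb_def C_def\<close>)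
  have eB: "cofactor (comb s A) 0 j = cofactor B 0 j" if "j < m" for j
    unfolding cofactor_def
    by (rule arg_cong[where f="\<lambda>X. _ * det X"], rule eq_matI)
       (use A that in \<open>auto simp: mat_delete_def comb_def B_def\<close>)
  have eK: "(comb s A) $$ (0,j) = A$$(0,0) * C$$(0,j) - s * B$$(0,j)" if "j < m" for j
    using A that m by (auto simp: mat_delete_def comb_def B_def C_def)
  have "det (comb s A) = (\<Sum>j<m. A$$(0,0) * (C$$(0,j) * cofactor C 0 j) - s * (B$$(0,j) * cofactor B 0 j))"
    unfolding dK by (rule sum.cong) (auto simp: eK eC[symmetric] eB[symmetric] algebra_simps)
  also have "\<dots> = A$$(0,0) * det C - s * det B"
    unfolding dC dB by (simp add: sum_subtractf sum_distrib_left)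
  finally show ?thesis using 1 by simp
qed


fun PP :: "real \<Rightarrow> real \<Rightarrow> nat \<Rightarrow> real \<Rightarrow> real \<Rightarrow> real" where
  "PP s t 0 p q = 1"
| "PP s t (Suc 0) p q = p"
| "PP s t (Suc (Suc m)) p q = PP s t (Suc m) (t*p + s*q) (s*p)"

definition hp :: "real \<Rightarrow> real \<Rightarrow> nat \<Rightarrow> real \<Rightarrow> real \<Rightarrow> real mat set" where
  "hp s t m p q = {A \<in> carrier_mat m m.
     (\<forall>i<m. \<forall>j<m. (i = Suc j \<longrightarrow> A $$ (i, j) = s)
                 \<and> (i > Suc j \<longrightarrow> A $$ (i, j) = 0)
                 \<and> (0 < i \<and> i \<le> j \<longrightarrow> A $$ (i, j) \<in> {0..t}))
     \<and> ((\<forall>j<m. A $$ (0, j) \<in> {-q..p}) \<or> (\<forall>j<m. A $$ (0, j) \<in> {-p..q}))}"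

lemma row_bound:
  fixes s t p q a b c :: real
  assumes "0<s" "s\<le>t" "0\<le>q" "q\<le>p" "0 \<le> c" "c \<le> t"
    and ab: "(-q \<le> a \<and> a \<le> p \<and> -q \<le> b \<and> b \<le> p) \<or> (-p \<le> a \<and> a \<le> q \<and> -p \<le> b \<and> b \<le> q)"
  shows "(0 \<le> a \<longrightarrow> -(s*p) \<le> a*c - s*b \<and> a*c - s*b \<le> t*p+s*q)
       \<and> (a < 0 \<longrightarrow> -(t*p+s*q) \<le> a*c - s*b \<and> a*c - s*b \<le> s*p)"
proof (intro conjI impI)
  have bp: "\<bar>b\<bar> \<le> p" using ab assms by auto
  have "s*\<bar>b\<bar> \<le> s*p" using bp assms by (intro mult_left_mono) auto
  hence "\<bar>s*b\<bar> \<le> s*p" using assms by (simp add: abs_mult)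
  hence sb1: "-(s*p) \<le> - s*b" "- s * b \<le> s*p" "s*b \<le> s * p" "-(s*p) \<le> s*b"
    by (auto simp: abs_le_iff)
  have tpq: "t*q + s*p \<le> t*p + s*q" 
  proof -
    have "0 \<le> (t-s)*(p-q)" using assms by simp
    thus ?thesis by (simp add: algebra_simps)
  qed
  assume a: "0 \<le> a"
  have "0 \<le> a*c" using a assms by simp
  moreover have "a*c \<le> t*p"
  proof -
    have "a \<le> p" using ab assms by linarith
    hence "a*c \<le> p*t" using a assms by (intro mult_mono) auto
    thus ?thesis by (simp add: mult.commute)
  qed
  moreover have "a * c \<le> t*q" if "a \<le> q"
  proof -
    have "a*c \<le> q*t" using a that assms by (intro mult_mono) auto
    thus ?thesis by (simp add: mult.commute)
  qed
  moreover have "s*b \<ge> -(s*q)" if "-q \<le> b" using mult_left_mono[of "-q" b s] that assms by simp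
  moreover have "s*b \<ge> -(s*p)" if "-p \<le> b" using mult_left_mono[of "-p" b s] that assms by simp
  ultimately show "-(s*p) \<le> a*c - s*b" "a*c - s*b \<le> t*p+s*q"
    using ab sb1 tpq assms by (smt (verit))+
next
  have bp: "\<bar>b\<bar> \<le> p" using ab assms by auto
  have "s*\<bar>b\<bar> \<le> s*p" using bp assms by (intro mult_left_mono) auto
  hence "\<bar>s*b\<bar> \<le> s*p" using assms by (simp add: abs_mult)
  hence sb1: "-(s*p) \<le> - s*b" "- s * b \<le> s*p" "s*b \<le> s * p" "-(s*p) \<le> s*b"
    by (auto simp: abs_le_iff)
  have tpq: "t*q + s*p \<le> t*p + s*q" 
  proof -
    have "0 \<le> (t-s)*(p-q)" using assms by simp
    thus ?thesis by (simp add: algebra_simps)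
  qed
  assume a: "a < 0"
  have "a*c \<le> 0" using a assms by (simp add: mult_nonpos_nonneg)
  moreover have "-(t*p) \<le> a*c"
  proof -
    have "-a \<le> p" using ab assms by linarith
    hence "(-a)*c \<le> p*t" using a assms by (intro mult_mono) auto
    thus ?thesis by (simp add: mult.commute)
  qed
  moreover have "-(t*q) \<le> a * c" if "-q \<le> a"
  proof -
    have "(-a)*c \<le> q*t" using a that assms by (intro mult_mono) auto
    thus ?thesis by (simp add: mult.commute)
  qed
  moreover have "s*b \<ge> -(s*q)" if "-q \<le> b" using mult_left_mono[of "-q" b s] that assms by simp
  moreover have "s*b \<le> s*q" if "b \<le> q" using mult_left_mono[of b q s] that assms by simp
  ultimately show "-(t*p+s*q) \<le> a*c - s*b" "a*c - s*b \<le> s*p"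
    using ab sb1 tpq assms by (smt (verit))+
qed


lemma PP_nonneg: "0 \<le> s \<Longrightarrow> 0 \<le> t \<Longrightarrow> 0 \<le> p \<Longrightarrow> 0 \<le> q \<Longrightarrow> 0 \<le> PP s t m p q"
  by (induction s t m p q rule: PP.induct) auto

lemma PP_mono: "0 \<le> s \<Longrightarrow> 0 \<le> t \<Longrightarrow> 0 \<le> p \<Longrightarrow> 0 \<le> q \<Longrightarrow> p \<le> p' \<Longrightarrow> q \<le> q'
   \<Longrightarrow> PP s t m p q \<le> PP s t m p' q'"
proof (induction s t m p q arbitrary: p' q' rule: PP.induct)
  case (3 s t m p q)
  have "t*p + s*q \<le> t*p' + s*q'" using 3 by (intro add_mono mult_left_mono) auto
  moreover have "s*p \<le> s*p'" using 3 by (intro mult_left_mono) auto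
  ultimately show ?case using 3 by simp
qed auto

lemma comb_hp:
  assumes s: "0<s" "s\<le>t" and pq: "0\<le>q" "q\<le>p" and A: "A \<in> hp s t (Suc (Suc k)) p q"
  shows "comb s A \<in> hp s t (Suc k) (t*p+s*q) (s*p)"
proof -
  have Ac: "A \<in> carrier_mat (Suc (Suc k)) (Suc (Suc k))" using A unfolding hp_def by auto
  have Ae: "\<And>i j. i<Suc (Suc k) \<Longrightarrow> j<Suc (Suc k) \<Longrightarrow> (i = Suc j \<longrightarrow> A $$ (i, j) = s)
                 \<and> (i > Suc j \<longrightarrow> A $$ (i, j) = 0)
                 \<and> (0 < i \<and> i \<le> j \<longrightarrow> A $$ (i, j) \<in> {0..t})" using A unfolding hp_def by auto
  have row: "(\<forall>j<Suc (Suc k). A $$ (0, j) \<in> {-q..p}) \<or> (\<forall>j<Suc (Suc k). A $$ (0, j) \<in> {-p..q})"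
    using A unfolding hp_def by auto
  let ?a = "A $$ (0,0)"
  have K: "comb s A $$ (i,j) = (if i = 0 then ?a * A$$(1, Suc j) - s * A$$(0, Suc j) else A$$(Suc i, Suc j))"
    if "i < Suc k" "j < Suc k" for i j using that Ac unfolding comb_def by auto
  have Kc: "comb s A \<in> carrier_mat (Suc k) (Suc k)" using Ac unfolding comb_def by auto
  have rb: "(0 \<le> ?a \<longrightarrow> -(s*p) \<le> ?a*A$$(1, Suc j) - s*A$$(0, Suc j) \<and> ?a*A$$(1, Suc j) - s*A$$(0, Suc j) \<le> t*p+s*q)
       \<and> (?a < 0 \<longrightarrow> -(t*p+s*q) \<le> ?a*A$$(1, Suc j) - s*A$$(0, Suc j) \<and> ?a*A$$(1, Suc j) - s*A$$(0, Suc j) \<le> s*p)"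
    if j: "j < Suc k" for j
  proof (rule row_bound[OF s pq])
    show "0 \<le> A$$(1, Suc j)" "A$$(1, Suc j) \<le> t" using Ae[of 1 "Suc j"] j by auto
    show "(-q \<le> ?a \<and> ?a \<le> p \<and> -q \<le> A$$(0, Suc j) \<and> A$$(0, Suc j) \<le> p) \<or> (-p \<le> ?a \<and> ?a \<le> q \<and> -p \<le> A$$(0, Suc j) \<and> A$$(0, Suc j) \<le> q)"
      using row j by (metis atLeastAtMost_iff zero_less_Suc Suc_mono)
  qed
  have lower: "\<forall>i<Suc k. \<forall>j<Suc k. (i = Suc j \<longrightarrow> comb s A $$ (i, j) = s)
                 \<and> (i > Suc j \<longrightarrow> comb s A $$ (i, j) = 0)
                 \<and> (0 < i \<and> i \<le> j \<longrightarrow> comb s A $$ (i, j) \<in> {0..t})"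
  proof (intro allI impI)
    fix i j assume ij: "i < Suc k" "j < Suc k"
    show "(i = Suc j \<longrightarrow> comb s A $$ (i, j) = s)
                 \<and> (i > Suc j \<longrightarrow> comb s A $$ (i, j) = 0)
                 \<and> (0 < i \<and> i \<le> j \<longrightarrow> comb s A $$ (i, j) \<in> {0..t})"
      using Ae[of "Suc i" "Suc j"] ij K[OF ij] by auto
  qed
  have r0: "(\<forall>j<Suc k. comb s A $$ (0, j) \<in> {-(s*p)..t*p+s*q}) \<or> (\<forall>j<Suc k. comb s A $$ (0, j) \<in> {-(t*p+s*q)..s*p})"
  proof (cases "0 \<le> ?a")
    case True
    then show ?thesis using rb K by auto
  next
    case False
    then show ?thesis using rb K by auto
  qed
  show ?thesis unfolding hp_def using Kc lower r0 by auto
qed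

lemma hp_bound:
  assumes s: "0<s" "s\<le>t"
  shows "0\<le>q \<Longrightarrow> q\<le>p \<Longrightarrow> A \<in> hp s t (Suc k) p q \<Longrightarrow> \<bar>det A\<bar> \<le> PP s t (Suc k) p q"
proof (induction k arbitrary: p q A)
  case 0
  have Ac: "A \<in> carrier_mat 1 1" using 0 unfolding hp_def by auto
  have "A $$ (0,0) \<in> {-q..p} \<or> A $$ (0,0) \<in> {-p..q}" using 0 unfolding hp_def by auto
  then show ?case using det_single[OF Ac] 0 by auto
next
  case (Suc k)
  have Ac: "A \<in> carrier_mat (Suc (Suc k)) (Suc (Suc k))" using Suc unfolding hp_def by auto
  have "det A = det (comb s A)"
  proof (rule det_comb[OF Ac])
    show "A $$ (1,0) = s" "\<forall>i. 1 < i \<and> i < Suc (Suc k) \<longrightarrow> A$$(i,0) = 0"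
      using Suc.prems(3) unfolding hp_def by auto
  qed simp
  moreover have "\<bar>det (comb s A)\<bar> \<le> PP s t (Suc k) (t*p+s*q) (s*p)"
  proof (rule Suc.IH)
    show "0 \<le> s*p" using s Suc.prems by simp
    show "s*p \<le> t*p+s*q" using s Suc.prems mult_right_mono[of s t p] mult_nonneg_nonneg[of s q] by linarith
    show "comb s A \<in> hp s t (Suc k) (t*p+s*q) (s*p)" by (rule comb_hp[OF s Suc.prems])
  qed
  ultimately show ?case by simp
qed


definition W :: "real \<Rightarrow> real \<Rightarrow> nat \<Rightarrow> real \<Rightarrow> real \<Rightarrow> real mat" where
 "W s t m p q = mat m m (\<lambda>(i,j). if i = Suc j then s else if i \<le> j then
     (if even (j - i) then (if i = 0 then p else t) else (if i = 0 then -q else 0)) else 0)"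

lemma comb_W: "comb s (W s t (Suc (Suc k)) p q) = W s t (Suc k) (t*p+s*q) (s*p)"
proof (rule eq_matI)
  fix i j assume ij: "i < dim_row (W s t (Suc k) (t*p+s*q) (s*p))" "j < dim_col (W s t (Suc k) (t*p+s*q) (s*p))"
  hence ij': "i < Suc k" "j < Suc k" unfolding W_def by auto
  show "comb s (W s t (Suc (Suc k)) p q) $$ (i, j) = W s t (Suc k) (t*p+s*q) (s*p) $$ (i, j)"
  proof (cases "i = 0")
    case True
    then show ?thesis using ij' by (cases "even j") (auto simp: comb_def W_def algebra_simps)
  next
    case False
    then show ?thesis using ij' by (auto simp: comb_def W_def)
  qed
qed (auto simp: comb_def W_def)

lemma det_W: "det (W s t (Suc k) p q) = PP s t (Suc k) p q"
proof (induction k arbitrary: p q)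
  case 0
  have "W s t (Suc 0) p q \<in> carrier_mat 1 1" unfolding W_def by auto
  from det_single[OF this] show ?case unfolding W_def by simp
next
  case (Suc k)
  have "det (W s t (Suc (Suc k)) p q) = det (comb s (W s t (Suc (Suc k)) p q))"
    by (rule det_comb) (auto simp: W_def)
  then show ?case using Suc.IH by (simp add: comb_W)
qed

lemma PP_rec: "PP s t (Suc (Suc (Suc m))) p q = t * PP s t (Suc (Suc m)) p q + s^2 * PP s t (Suc m) p q"
proof (induction m arbitrary: p q)
  case 0
  then show ?case by (simp add: algebra_simps power2_eq_square)
next
  case (Suc m)
  have "PP s t (Suc (Suc (Suc (Suc m)))) p q = PP s t (Suc (Suc (Suc m))) (t*p+s*q) (s*p)" by simp
  also have "\<dots> = t * PP s t (Suc (Suc m)) (t*p+s*q) (s*p) + s^2 * PP s t (Suc m) (t*p+s*q) (s*p)"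
    by (rule Suc.IH)
  also have "\<dots> = t * PP s t (Suc (Suc (Suc m))) p q + s^2 * PP s t (Suc (Suc m)) p q" by simp
  finally show ?case .
qed


lemma Win: "0 \<le> t \<Longrightarrow> W s t n t 0 \<in> hess_set s n {0..t}"
    proof -
      assume t0: "0 \<le> t"
      have "W s t n t 0 \<in> carrier_mat n n" by (simp add: W_def)
      moreover have "\<forall>i<n. \<forall>j<n. (i = Suc j \<longrightarrow> W s t n t 0 $$ (i, j) = s)
                 \<and> (i > Suc j \<longrightarrow> W s t n t 0 $$ (i, j) = 0)
                 \<and> (i \<le> j \<longrightarrow> W s t n t 0 $$ (i, j) \<in> {0..t})"
      proof (intro allI impI conjI)
        fix i j assume ij: "i < n" "j < n"
        show "i = Suc j \<Longrightarrow> W s t n t 0 $$ (i, j) = s" using ij by (simp add: W_def)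
        show "i > Suc j \<Longrightarrow> W s t n t 0 $$ (i, j) = 0" using ij by (simp add: W_def)
        show "i \<le> j \<Longrightarrow> W s t n t 0 $$ (i, j) \<in> {0..t}" using ij t0 by (simp add: W_def)
      qed
      ultimately show ?thesis unfolding hess_set_def by blast
    qed

lemma hs_hp: "A \<in> hess_set s (Suc k) {0..t} \<Longrightarrow> A \<in> hp s t (Suc k) t 0"
  unfolding hess_set_def hp_def by auto


lemma key:
  assumes "0 < s" "s \<le> t" and n: "n \<ge> 1"
  shows "max_abs_det s t n = PP s t n t 0
      \<and> W s t n t 0 \<in> hess_set s n {0..t} \<and> \<bar>det (W s t n t 0)\<bar> = PP s t n t 0
      \<and> (\<forall>A\<in>hess_set s n {0..t}. \<bar>det A\<bar> \<le> PP s t n t 0)"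
proof -
    have t0: "0 \<le> t" using assms by simp
    obtain k where k: "n = Suc k" using n by (cases n) auto
    have Wi: "W s t n t 0 \<in> hess_set s n {0..t}" by (rule Win[OF t0])
    have "PP s t n t 0 \<ge> 0" using PP_nonneg[of s t t 0] assms by simp
    hence dW: "\<bar>det (W s t n t 0)\<bar> = PP s t n t 0"
      unfolding k det_W by simp
    have bd: "\<forall>A\<in>hess_set s n {0..t}. \<bar>det A\<bar> \<le> PP s t n t 0"
    proof
      fix A assume A: "A \<in> hess_set s n {0..t}"
      have "A \<in> hp s t (Suc k) t 0" using A hs_hp unfolding k by blast
      from hp_bound[OF assms(1,2) _ t0 this] show "\<bar>det A\<bar> \<le> PP s t n t 0" unfolding k by simp
    qed
    have "max_abs_det s t n = PP s t n t 0"
      unfolding max_abs_det_def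
    proof (rule cSup_eq_maximum)
      show "PP s t n t 0 \<in> (\<lambda>A. \<bar>det A\<bar>) ` hess_set s n {0..t}"
        using Wi dW by (metis image_eqI)
      show "\<And>x. x \<in> (\<lambda>A. \<bar>det A\<bar>) ` hess_set s n {0..t} \<Longrightarrow> x \<le> PP s t n t 0"
        using bd by blast
    qed
    with Wi dW bd show ?thesis by blast
qed


theorem theorem2p6:
  fixes s t :: real
  assumes "0 < s" and "s \<le> t"
  shows "(\<forall>n\<ge>1. (\<exists>A\<in>hess_set s n {0..t}. \<bar>det A\<bar> = max_abs_det s t n)
                \<and> (\<forall>A\<in>hess_set s n {0..t}. \<bar>det A\<bar> \<le> max_abs_det s t n))
         \<and> max_abs_det s t 1 = t
         \<and> max_abs_det s t 2 = t ^ 2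
         \<and> (\<forall>n>2. max_abs_det s t n = t * max_abs_det s t (n - 1) + s ^ 2 * max_abs_det s t (n - 2))"
proof -
  have M: "max_abs_det s t n = PP s t n t 0" if "n \<ge> 1" for n
    using key[OF assms that] by blast
  have r1: "max_abs_det s t 1 = t" using M[of "Suc 0"] by simp
  have r2: "max_abs_det s t 2 = t^2" using M[of "Suc (Suc 0)"] by (simp add: numeral_2_eq_2 power2_eq_square)
  have r3: "\<forall>n>2. max_abs_det s t n = t * max_abs_det s t (n - 1) + s ^ 2 * max_abs_det s t (n - 2)"
  proof (intro allI impI)
    fix n :: nat assume "n > 2"
    define m where "m = n - 3"
    have m: "n = Suc (Suc (Suc m))" using \<open>n > 2\<close> unfolding m_def by simp
    have e1: "max_abs_det s t n = PP s t (Suc (Suc (Suc m))) t 0" using M[of n] m by simp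
    have e2: "max_abs_det s t (n-1) = PP s t (Suc (Suc m)) t 0" using M[of "n-1"] m by simp
    have e3: "max_abs_det s t (n-2) = PP s t (Suc m) t 0" using M[of "n-2"] m by simp
    show "max_abs_det s t n = t * max_abs_det s t (n - 1) + s ^ 2 * max_abs_det s t (n - 2)"
      unfolding e1 e2 e3 by (rule PP_rec)
  qed
  have r0: "\<forall>n\<ge>1. (\<exists>A\<in>hess_set s n {0..t}. \<bar>det A\<bar> = max_abs_det s t n)
                \<and> (\<forall>A\<in>hess_set s n {0..t}. \<bar>det A\<bar> \<le> max_abs_det s t n)"
  proof (intro allI impI conjI)
    fix n :: nat assume n1: "n \<ge> 1"
    have k1: "max_abs_det s t n = PP s t n t 0" "W s t n t 0 \<in> hess_set s n {0..t}"
      "\<bar>det (W s t n t 0)\<bar> = PP s t n t 0" "\<forall>A\<in>hess_set s n {0..t}. \<bar>det A\<bar> \<le> PP s t n t 0"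
      using key[OF assms n1] by blast+
    show "\<exists>A\<in>hess_set s n {0..t}. \<bar>det A\<bar> = max_abs_det s t n"
      using k1(2) k1(3) unfolding k1(1) by blast
    show "\<forall>A\<in>hess_set s n {0..t}. \<bar>det A\<bar> \<le> max_abs_det s t n"
      using k1(4) unfolding k1(1) by blast
  qed
  from r0 r1 r2 r3 show ?thesis by (intro conjI)
qed

end
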